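(* Let $\lambda=(\lambda_1,\ldots,\lambda_n)\in\mathbb{R}_{<0}^n$ have pairwise distinct entries. Then $\nu_{0,\lambda}(t)\le 1$ and $\dot\nu_{0,\lambda}(t)\le 0$ for all $t\ge 0$, and $\nu_{0,\lambda}(0)=1$.
   Context: $V_\lambda$ is the $n\times n$ Vandermonde matrix with $(i,j)$ entry $\lambda_j^{i-1}$, and $[\nu_{0,\lambda}(t),\ldots,\nu_{n-1,\lambda}(t)]=[e^{\lambda_1 t},\ldots,e^{\lambda_n t}]V_\lambda^{-1}$. *)

theory Defs
  imports "HOL-Analysis.Analysis" "Jordan_Normal_Form.Gauss_Jordan_Elimination"
begin

text \<open>Vandermonde matrix V_lambda (0-indexed): entry (i,j) is lambda_j ^ i
  (i.e. lambda_j^(i-1) in the paper's 1-indexed convention).\<close>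
definition vandermonde :: "nat \<Rightarrow> (nat \<Rightarrow> real) \<Rightarrow> real mat" where
  "vandermonde n lam = mat n n (\<lambda>(i, j). lam j ^ i)"

definition vandermonde_inv :: "nat \<Rightarrow> (nat \<Rightarrow> real) \<Rightarrow> real mat" where
  "vandermonde_inv n lam = the (mat_inverse (vandermonde n lam))"

text \<open>[nu_0(t),...,nu_{n-1}(t)] = [e^{lambda_1 t},...,e^{lambda_n t}] V^{-1};
  nu k is the k-th (0-indexed) entry of this row vector.\<close>
definition nu :: "nat \<Rightarrow> nat \<Rightarrow> (nat \<Rightarrow> real) \<Rightarrow> real \<Rightarrow> real" where
  "nu n k lam t = (\<Sum>j<n. exp (lam j * t) * vandermonde_inv n lam $$ (j, k))"

end

theory Submission
  imports Defs "Jordan_Normal_Form.Determinant" begin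

lemma claim:
  fixes lam c :: "nat \<Rightarrow> real"
  shows "(\<forall>i<m. (\<Sum>j<Suc m. lam j ^ i * c j) = 0) \<Longrightarrow> (\<Sum>j<Suc m. lam j ^ m * c j) \<ge> 0
     \<Longrightarrow> t \<ge> 0 \<Longrightarrow> (\<Sum>j<Suc m. c j * exp (lam j * t)) \<ge> 0"
proof (induction m arbitrary: c t)
  case 0
  then show ?case by simp
next
  case (Suc m)
  define L where "L = lam (Suc m)"
  define c' where "c' j = (lam j - L) * c j" for j
  have ext: "(\<Sum>j<Suc m. lam j ^ i * c' j) = (\<Sum>j<Suc (Suc m). lam j ^ Suc i * c j) - L * (\<Sum>j<Suc (Suc m). lam j ^ i * c j)" for i
  proof -
    have "(\<Sum>j<Suc m. lam j ^ i * c' j) = (\<Sum>j<Suc (Suc m). lam j ^ i * ((lam j - L) * c j))"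
      by (simp add: c'_def L_def)
    also have "\<dots> = (\<Sum>j<Suc (Suc m). lam j ^ Suc i * c j - L * (lam j ^ i * c j))"
      by (rule sum.cong) (auto simp: algebra_simps)
    finally show ?thesis by (simp only: sum_subtractf sum_distrib_left)
  qed
  have m1: "\<forall>i<m. (\<Sum>j<Suc m. lam j ^ i * c' j) = 0"
    using Suc.prems(1) by (auto simp: ext simp del: sum.lessThan_Suc power_Suc)
  have m2: "(\<Sum>j<Suc m. lam j ^ m * c' j) \<ge> 0"
    using Suc.prems(1,2) by (auto simp: ext simp del: sum.lessThan_Suc power_Suc)
  have IH: "s \<ge> 0 \<Longrightarrow> (\<Sum>j<Suc m. c' j * exp (lam j * s)) \<ge> 0" for s
    using Suc.IH[OF m1 m2] by blast
  define g where "g s = exp (- L * s) * (\<Sum>j<Suc (Suc m). c j * exp (lam j * s))" for s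
  have der: "(g has_real_derivative exp (- L * s) * (\<Sum>j<Suc m. c' j * exp (lam j * s))) (at s)" for s
  proof -
    have "(g has_real_derivative (exp (- L * s) * (- L)) * (\<Sum>j<Suc (Suc m). c j * exp (lam j * s))
       + exp (- L * s) * (\<Sum>j<Suc (Suc m). c j * (exp (lam j * s) * lam j))) (at s)"
      unfolding g_def
      by (auto intro!: derivative_eq_intros sum.cong simp: algebra_simps)
    moreover have "(exp (- L * s) * (- L)) * (\<Sum>j<Suc (Suc m). c j * exp (lam j * s))
       + exp (- L * s) * (\<Sum>j<Suc (Suc m). c j * (exp (lam j * s) * lam j))
       = exp (- L * s) * (\<Sum>j<Suc m. c' j * exp (lam j * s))"
      by (simp add: c'_def L_def sum_distrib_left sum.distrib[symmetric] algebra_simps)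
    ultimately show ?thesis by simp
  qed
  have g0: "g 0 = 0"
    using Suc.prems(1)[rule_format, of 0] by (simp add: g_def)
  have "g 0 \<le> g t"
    by (rule DERIV_nonneg_imp_nondecreasing[OF Suc.prems(3)])
       (use der IH in \<open>blast intro: mult_nonneg_nonneg less_imp_le[OF exp_gt_zero]\<close>)
  then have "g t \<ge> 0" using g0 by simp
  then show ?case unfolding g_def by (simp add: zero_le_mult_iff)
qed

lemma vander_det:
  fixes lam :: "nat \<Rightarrow> real"
  assumes inj: "inj_on lam {..<n}"
  shows "Determinant.det (vandermonde n lam) \<noteq> 0"
proof
  let ?V = "vandermonde n lam"
  have V: "?V \<in> carrier_mat n n" by (simp add: vandermonde_def)
  assume "Determinant.det ?V = 0"
  then have "Determinant.det (transpose_mat ?V) = 0" by (simp add: det_transpose[OF V])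
  then obtain v where v: "v \<in> carrier_vec n" "v \<noteq> 0\<^sub>v n" "transpose_mat ?V *\<^sub>v v = 0\<^sub>v n"
    using det_0_iff_vec_prod_zero_field[of "transpose_mat ?V" n] V by auto
  define p where "p = (\<Sum>i<n. monom (v $ i) i)"
  have root: "poly p (lam j) = 0" if "j < n" for j
  proof -
    have "(transpose_mat ?V *\<^sub>v v) $ j = 0" using v(3) that by simp
    then have "(\<Sum>i\<in>{0..<n}. lam j ^ i * v $ i) = 0"
    proof -
      have "(transpose_mat ?V *\<^sub>v v) $ j = (\<Sum>i\<in>{0..<n}. ?V $$ (i, j) * v $ i)"
        using that V v(1) by (simp add: scalar_prod_def col_def)
      also have "\<dots> = (\<Sum>i\<in>{0..<n}. lam j ^ i * v $ i)"
        by (rule sum.cong) (use that in \<open>auto simp: vandermonde_def\<close>)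
      finally show ?thesis using \<open>(transpose_mat ?V *\<^sub>v v) $ j = 0\<close> by simp
    qed
    then show ?thesis
      by (simp add: p_def poly_sum poly_monom atLeast0LessThan mult.commute)
  qed
  have p0: "p = 0"
  proof (rule ccontr)
    assume "p \<noteq> 0"
    then have "card {x. poly p x = 0} \<le> degree p" by (rule card_poly_roots_bound)
    moreover have "lam ` {..<n} \<subseteq> {x. poly p x = 0}" using root by auto
    moreover have "finite {x. poly p x = 0}" using \<open>p \<noteq> 0\<close> by (rule poly_roots_finite)
    ultimately have "n \<le> degree p"
    proof -
      assume a: "card {x. poly p x = 0} \<le> degree p" "lam ` {..<n} \<subseteq> {x. poly p x = 0}"
         "finite {x. poly p x = 0}"
      have "n = card (lam ` {..<n})" using card_image[OF inj] by simp
      also have "\<dots> \<le> card {x. poly p x = 0}" using a(2,3) by (rule card_mono[rotated])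
      finally show ?thesis using a(1) by linarith
    qed
    moreover have "degree p \<le> n - 1" unfolding p_def
      by (rule degree_sum_le) (auto intro: order.trans[OF degree_monom_le])
    moreover have "n \<ge> 1"
    proof (rule ccontr)
      assume "\<not> n \<ge> 1" then have "n = 0" by simp
      then show False using v by auto
    qed
    ultimately show False by simp
  qed
  have "v = 0\<^sub>v n"
  proof (rule eq_vecI)
    fix i assume "i < dim_vec (0\<^sub>v n)"
    then have i: "i < n" by simp
    have "coeff p i = v $ i" unfolding p_def coeff_sum coeff_monom
      using i by (simp add: sum.delta)
    then show "v $ i = 0\<^sub>v n $ i" using p0 i by simp
  qed (use v in simp)
  then show False using v by simp
qed


theorem proposition9:
  fixes n :: nat and lam :: "nat \<Rightarrow> real"
  assumes "n \<ge> 1"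
    and "\<And>j. j < n \<Longrightarrow> lam j < 0"
    and "inj_on lam {..<n}"
  shows "(\<forall>t\<ge>0. nu n 0 lam t \<le> 1 \<and> deriv (nu n 0 lam) t \<le> 0) \<and> nu n 0 lam 0 = 1"
proof -
  let ?V = "vandermonde n lam"
  define W where "W = vandermonde_inv n lam"
  define w where "w j = W $$ (j, 0)" for j
  define M where "M i = (\<Sum>j<n. lam j ^ i * w j)" for i
  have V: "?V \<in> carrier_mat n n" by (simp add: vandermonde_def)
  have "?V \<in> Units (ring_mat TYPE(real) n ())"
    by (rule det_non_zero_imp_unit[OF V vander_det[OF assms(3)]])
  then obtain B where B: "mat_inverse ?V = Some B"
    using mat_inverse(1)[OF V, of "()"] by (cases "mat_inverse ?V") auto
  then have VW: "?V * W = 1\<^sub>m n" "W \<in> carrier_mat n n"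
    using mat_inverse(2)[OF V B] by (auto simp: W_def vandermonde_inv_def)
  have mom: "M i = (if i = 0 then 1 else 0)" if "i < n" for i
  proof -
    have "(?V * W) $$ (i, 0) = (if i = 0 then 1 else 0)" using VW that assms(1) by auto
    moreover have "(?V * W) $$ (i, 0) = M i"
      using that assms(1) VW(2)
      by (simp add: M_def w_def scalar_prod_def vandermonde_def row_def col_def atLeast0LessThan)
    ultimately show ?thesis by simp
  qed
  have top: "M n < 0"
  proof -
    define q where "q = (\<Prod>k<n. [:- lam k, 1:])"
    have dq: "degree q = n" unfolding q_def
      by (subst degree_prod_eq_sum_degree) auto
    have lq: "coeff q n = 1"
      using lead_coeff_prod[of "\<lambda>k. [:- lam k, 1:]" "{..<n}"] dq by (simp add: q_def)
    have q0: "coeff q 0 = (\<Prod>k<n. - lam k)"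
      by (simp add: q_def poly_0_coeff_0[symmetric] poly_prod)
    have q0pos: "coeff q 0 > 0" unfolding q0
      by (rule prod_pos) (use assms(2) in auto)
    have qr: "poly q (lam j) = 0" if "j < n" for j
      using that by (auto simp: q_def poly_prod)
    have "0 = (\<Sum>j<n. w j * poly q (lam j))" using qr by simp
    also have "\<dots> = (\<Sum>j<n. w j * (\<Sum>i\<le>n. coeff q i * lam j ^ i))"
      by (simp add: poly_altdef dq)
    also have "\<dots> = (\<Sum>i\<le>n. coeff q i * M i)"
      by (simp add: M_def sum_distrib_left sum_distrib_right algebra_simps sum.swap[of _ "{..n}"])
    also have "\<dots> = (\<Sum>i<n. coeff q i * M i) + M n"
      by (simp add: lq lessThan_Suc_atMost[symmetric])
    also have "(\<Sum>i<n. coeff q i * M i) = (\<Sum>i<n. if i = 0 then coeff q i else 0)"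
      by (rule sum.cong) (auto simp: mom)
    also have "\<dots> = coeff q 0" using assms(1) by (simp add: sum.delta)
    finally show ?thesis using q0pos by linarith
  qed
  have nu_eq: "nu n 0 lam = (\<lambda>t. \<Sum>j<n. exp (lam j * t) * w j)"
    by (simp add: nu_def w_def W_def fun_eq_iff)
  have der: "(nu n 0 lam has_real_derivative (\<Sum>j<n. (- lam j * w j) * exp (lam j * t)) * (-1)) (at t)" for t
  proof -
    have "((\<lambda>t. \<Sum>j<n. exp (lam j * t) * w j) has_real_derivative (\<Sum>j<n. exp (lam j * t) * lam j * w j)) (at t)"
      by (auto intro!: derivative_eq_intros sum.cong simp: algebra_simps)
    moreover have "(\<Sum>j<n. exp (lam j * t) * lam j * w j) = (\<Sum>j<n. (- lam j * w j) * exp (lam j * t)) * (-1)"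
      by (simp add: sum_distrib_right algebra_simps sum_negf[symmetric])
    ultimately show ?thesis by (simp add: nu_eq)
  qed
  have pos: "(\<Sum>j<n. (- lam j * w j) * exp (lam j * t)) \<ge> 0" if "t \<ge> 0" for t
  proof -
    obtain m where m: "n = Suc m" using assms(1) by (cases n) auto
    have "(\<Sum>j<Suc m. (- lam j * w j) * exp (lam j * t)) \<ge> 0"
    proof (rule claim)
      show "\<forall>i<m. (\<Sum>j<Suc m. lam j ^ i * (- lam j * w j)) = 0"
      proof (intro allI impI)
        fix i assume "i < m"
        have "(\<Sum>j<Suc m. lam j ^ i * (- lam j * w j)) = - M (Suc i)"
          by (simp add: M_def m sum_negf[symmetric] algebra_simps del: sum.lessThan_Suc)
        then show "(\<Sum>j<Suc m. lam j ^ i * (- lam j * w j)) = 0"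
          using mom[of "Suc i"] \<open>i < m\<close> m by simp
      qed
      have "(\<Sum>j<Suc m. lam j ^ m * (- lam j * w j)) = - M n"
        by (simp add: M_def m sum_negf[symmetric] algebra_simps del: sum.lessThan_Suc)
      then show "(\<Sum>j<Suc m. lam j ^ m * (- lam j * w j)) \<ge> 0" using top by simp
    qed (rule that)
    then show ?thesis using m by simp
  qed
  have dnp: "deriv (nu n 0 lam) t \<le> 0" if "t \<ge> 0" for t
    using DERIV_imp_deriv[OF der[of t]] pos[OF that] by simp
  have nu0: "nu n 0 lam 0 = 1"
    using mom[of 0] assms(1) by (simp add: nu_eq M_def mult.commute)
  have "nu n 0 lam t \<le> 1" if "t \<ge> 0" for t
  proof -
    have "nu n 0 lam t \<le> nu n 0 lam 0"
      by (rule DERIV_nonpos_imp_nonincreasing[OF that])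
         (use der pos in \<open>fastforce\<close>)
    then show ?thesis using nu0 by simp
  qed
  then show ?thesis using dnp nu0 by blast
qed

end
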